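(* Let $M$ be a paracompact $\mathcal{C}^1$-smooth Banach manifold modeled on a Banach space $X$ with property $( * )$, and let $N$ be a closed $\mathcal{C}^1$-smooth submanifold of $M$. Then every $\mathcal{C}^1$-smooth function $f:N\to\mathbb{R}$ has a $\mathcal{C}^1$-smooth extension $F:M\to\mathbb{R}$, i.e. $F|_N=f$.
   Context: A Banach space $X$ has property $( * )$ if there is a constant $C_0$, depending only on $X$, such that for every Lipschitz function $f:X\to\mathbb{R}$ and every $\varepsilon>0$ there is a Lipschitz, $\mathcal{C}^1$-smooth function $K:X\to\mathbb{R}$ with $|f(x)-K(x)|<\varepsilon$ for all $x\in X$ and $\operatorname{Lip}(K)\le C_0\operatorname{Lip}(f)$. *)

theory Defs
  imports "HOL-Analysis.Analysis"
begin

definition C1_on :: "'a::real_normed_vector set \<Rightarrow> ('a \<Rightarrow> 'b::real_normed_vector) \<Rightarrow> bool" where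
  "C1_on U g \<longleftrightarrow>
     (\<exists>D :: 'a \<Rightarrow> ('a \<Rightarrow>\<^sub>L 'b).
        (\<forall>x\<in>U. (g has_derivative blinfun_apply (D x)) (at x)) \<and> continuous_on U D)"

text \<open>The derivative at x is a bounded linear functional on Y (represented by a bounded
  linear functional on X, which is no restriction by Hahn--Banach); its continuity is
  measured in the operator norm of functionals on Y.\<close>
definition C1_rel :: "'a::real_normed_vector set \<Rightarrow> 'a set \<Rightarrow> ('a \<Rightarrow> real) \<Rightarrow> bool" where
  "C1_rel Y V g \<longleftrightarrow>
     (\<exists>D :: 'a \<Rightarrow> ('a \<Rightarrow>\<^sub>L real).
        (\<forall>x\<in>V. (g has_derivative blinfun_apply (D x)) (at x within V)) \<and>
        (\<forall>x\<in>V. \<forall>e>0. \<exists>d>0. \<forall>x'\<in>V. dist x' x < d \<longrightarrow>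
            (\<forall>v\<in>Y. \<bar>D x' v - D x v\<bar> \<le> e * norm v)))"

definition Lip :: "('a::metric_space \<Rightarrow> 'b::metric_space) \<Rightarrow> real" where
  "Lip f = Inf {L. lipschitz_on L UNIV f}"

definition property_star :: "'x::banach itself \<Rightarrow> bool" where
  "property_star TYPE('x) \<longleftrightarrow>
     (\<exists>C0::real. \<forall>(f::'x \<Rightarrow> real) (\<epsilon>::real).
        (\<exists>L. lipschitz_on L UNIV f) \<and> \<epsilon> > 0 \<longrightarrow>
        (\<exists>K::'x \<Rightarrow> real. (\<exists>L. lipschitz_on L UNIV K) \<and> C1_on UNIV K \<and>
             (\<forall>x. \<bar>f x - K x\<bar> < \<epsilon>) \<and> Lip K \<le> C0 * Lip f))"

definition locally_finite_family :: "'m::topological_space set set \<Rightarrow> bool" where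
  "locally_finite_family \<V> \<longleftrightarrow>
     (\<forall>x. \<exists>W. open W \<and> x \<in> W \<and> finite {V \<in> \<V>. V \<inter> W \<noteq> {}})"

definition paracompact_space :: "'m::topological_space itself \<Rightarrow> bool" where
  "paracompact_space TYPE('m) \<longleftrightarrow>
     (\<forall>x y::'m. x \<noteq> y \<longrightarrow> (\<exists>U V. open U \<and> open V \<and> x \<in> U \<and> y \<in> V \<and> U \<inter> V = {})) \<and>
     (\<forall>\<U> :: 'm set set. (\<forall>U\<in>\<U>. open U) \<and> \<Union>\<U> = UNIV \<longrightarrow>
        (\<exists>\<V>. (\<forall>V\<in>\<V>. open V) \<and> \<Union>\<V> = UNIV \<and> (\<forall>V\<in>\<V>. \<exists>U\<in>\<U>. V \<subseteq> U) \<and>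
             locally_finite_family \<V>))"

definition is_chart :: "'m::topological_space set \<Rightarrow> ('m \<Rightarrow> 'x::banach) \<Rightarrow> bool" where
  "is_chart U \<phi> \<longleftrightarrow> open U \<and> open (\<phi> ` U) \<and> inj_on \<phi> U \<and>
     continuous_on U \<phi> \<and> continuous_on (\<phi> ` U) (inv_into U \<phi>)"

definition C1_compatible :: "'m::topological_space set \<Rightarrow> ('m \<Rightarrow> 'x::banach) \<Rightarrow>
     'm set \<Rightarrow> ('m \<Rightarrow> 'x) \<Rightarrow> bool" where
  "C1_compatible U \<phi> V \<psi> \<longleftrightarrow>
     C1_on (\<phi> ` (U \<inter> V)) (\<psi> \<circ> inv_into U \<phi>) \<and> C1_on (\<psi> ` (U \<inter> V)) (\<phi> \<circ> inv_into V \<psi>)"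

definition C1_atlas :: "('m::topological_space set \<times> ('m \<Rightarrow> 'x::banach)) set \<Rightarrow> bool" where
  "C1_atlas A \<longleftrightarrow>
     (\<forall>(U,\<phi>)\<in>A. is_chart U \<phi>) \<and> (\<Union>(U,\<phi>)\<in>A. U) = UNIV \<and>
     (\<forall>(U,\<phi>)\<in>A. \<forall>(V,\<psi>)\<in>A. C1_compatible U \<phi> V \<psi>)"

text \<open>Charts of the maximal atlas determined by A.\<close>
definition atlas_chart :: "('m::topological_space set \<times> ('m \<Rightarrow> 'x::banach)) set \<Rightarrow>
     'm set \<Rightarrow> ('m \<Rightarrow> 'x) \<Rightarrow> bool" where
  "atlas_chart A U \<phi> \<longleftrightarrow> is_chart U \<phi> \<and> (\<forall>(V,\<psi>)\<in>A. C1_compatible U \<phi> V \<psi>)"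

definition C1_fun :: "('m::topological_space set \<times> ('m \<Rightarrow> 'x::banach)) set \<Rightarrow> ('m \<Rightarrow> real) \<Rightarrow> bool" where
  "C1_fun A F \<longleftrightarrow> (\<forall>(U,\<phi>)\<in>A. C1_on (\<phi> ` U) (F \<circ> inv_into U \<phi>))"

definition split_subspace :: "'x::banach set \<Rightarrow> bool" where
  "split_subspace Y \<longleftrightarrow> subspace Y \<and> closed Y \<and>
     (\<exists>Z. subspace Z \<and> closed Z \<and> Y \<inter> Z = {0} \<and> (\<forall>x. \<exists>y\<in>Y. \<exists>z\<in>Z. x = y + z))"

definition submanifold_chart :: "('m::topological_space set \<times> ('m \<Rightarrow> 'x::banach)) set \<Rightarrow>
     'm set \<Rightarrow> 'm set \<Rightarrow> ('m \<Rightarrow> 'x) \<Rightarrow> 'x set \<Rightarrow> bool" where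
  "submanifold_chart A N U \<phi> Y \<longleftrightarrow>
     atlas_chart A U \<phi> \<and> split_subspace Y \<and> \<phi> ` (U \<inter> N) = \<phi> ` U \<inter> Y"

definition C1_submanifold :: "('m::topological_space set \<times> ('m \<Rightarrow> 'x::banach)) set \<Rightarrow>
     'm set \<Rightarrow> bool" where
  "C1_submanifold A N \<longleftrightarrow>
     (\<forall>p\<in>N. \<exists>U \<phi> Y. p \<in> U \<and> submanifold_chart A N U \<phi> Y)"

definition C1_fun_on_sub :: "('m::topological_space set \<times> ('m \<Rightarrow> 'x::banach)) set \<Rightarrow>
     'm set \<Rightarrow> ('m \<Rightarrow> real) \<Rightarrow> bool" where
  "C1_fun_on_sub A N f \<longleftrightarrow>
     (\<forall>U \<phi> Y. submanifold_chart A N U \<phi> Y \<longrightarrow> C1_rel Y (\<phi> ` (U \<inter> N)) (f \<circ> inv_into U \<phi>))"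

end

theory Submission
  imports Defs
begin

lemma C1_onI:
  assumes "\<And>x. x \<in> U \<Longrightarrow> (g has_derivative blinfun_apply (D x)) (at x)" "continuous_on U D"
  shows "C1_on U g"
  using assms unfolding C1_on_def by blast

lemma C1_on_subset: "C1_on U g \<Longrightarrow> T \<subseteq> U \<Longrightarrow> C1_on T g"
  unfolding C1_on_def by (meson continuous_on_subset subsetD)

lemma C1_on_cong:
  assumes "C1_on U g" "open U" "\<And>x. x \<in> U \<Longrightarrow> g x = h x"
  shows "C1_on U h"
proof -
  from assms(1) obtain D where D: "\<forall>x\<in>U. (g has_derivative blinfun_apply (D x)) (at x)" "continuous_on U D"
    unfolding C1_on_def by blast
  show ?thesis
  proof (rule C1_onI[OF _ D(2)])
    fix x assume x: "x \<in> U"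
    show "(h has_derivative blinfun_apply (D x)) (at x)"
      using has_derivative_transform_within_open[OF D(1)[rule_format, OF x] assms(2) x] assms(3) by blast
  qed
qed

lemma C1_on_Union:
  assumes "\<And>S. S \<in> \<S> \<Longrightarrow> open S" "\<And>S. S \<in> \<S> \<Longrightarrow> C1_on S g"
  shows "C1_on (\<Union>\<S>) g"
proof -
  have "\<forall>S\<in>\<S>. \<exists>D. (\<forall>x\<in>S. (g has_derivative blinfun_apply (D x)) (at x)) \<and> continuous_on S D"
    using assms(2) unfolding C1_on_def by blast
  then obtain DD where DD: "\<And>S. S \<in> \<S> \<Longrightarrow> (\<forall>x\<in>S. (g has_derivative blinfun_apply (DD S x)) (at x)) \<and> continuous_on S (DD S)"
    by metis
  define D where "D x = DD (SOME S. S \<in> \<S> \<and> x \<in> S) x" for x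
  have eq: "D x = DD S x" if "S \<in> \<S>" "x \<in> S" for S x
  proof -
    let ?T = "SOME S. S \<in> \<S> \<and> x \<in> S"
    have T: "?T \<in> \<S> \<and> x \<in> ?T" using someI[of "\<lambda>S. S \<in> \<S> \<and> x \<in> S"] that by blast
    have "blinfun_apply (DD ?T x) = blinfun_apply (DD S x)"
      using has_derivative_unique DD T that by blast
    then show ?thesis unfolding D_def using blinfun_eqI by metis
  qed
  show ?thesis
  proof (rule C1_onI)
    fix x assume "x \<in> \<Union>\<S>"
    then obtain S where "S \<in> \<S>" "x \<in> S" by blast
    then show "(g has_derivative blinfun_apply (D x)) (at x)" using DD eq by metis
  next
    show "continuous_on (\<Union>\<S>) D"
    proof (rule continuous_on_open_Union)
      fix S assume S: "S \<in> \<S>"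
      show "open S" using assms(1) S .
      show "continuous_on S D"
        using continuous_on_cong[of S S D "DD S"] DD S eq by metis
    qed
  qed
qed

lemma C1_on_compose:
  fixes f :: "'a::real_normed_vector \<Rightarrow> 'b::real_normed_vector" and g :: "'b \<Rightarrow> 'c::real_normed_vector"
  assumes "C1_on S f" "C1_on T g" "f ` S \<subseteq> T"
  shows "C1_on S (g \<circ> f)"
proof -
  obtain Df where Df: "\<forall>x\<in>S. (f has_derivative blinfun_apply (Df x)) (at x)" "continuous_on S Df"
    using assms(1) unfolding C1_on_def by blast
  obtain Dg where Dg: "\<forall>x\<in>T. (g has_derivative blinfun_apply (Dg x)) (at x)" "continuous_on T Dg"
    using assms(2) unfolding C1_on_def by blast
  have cf: "continuous_on S f"
    using Df(1) has_derivative_continuous continuous_at_imp_continuous_on by blast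
  show ?thesis
  proof (rule C1_onI[where D="\<lambda>x. Dg (f x) o\<^sub>L Df x"])
    fix x assume x: "x \<in> S"
    have "f x \<in> T" using x assms(3) by blast
    then show "(g \<circ> f has_derivative blinfun_apply (Dg (f x) o\<^sub>L Df x)) (at x)"
      by (rule has_derivative_eq_rhs[OF diff_chain_at[OF Df(1)[rule_format, OF x] Dg(1)[rule_format]]])
        (auto simp: o_def)
  next
    have "continuous_on S (Dg \<circ> f)"
      by (rule continuous_on_compose[OF cf]) (rule continuous_on_subset[OF Dg(2) assms(3)])
    then show "continuous_on S (\<lambda>x. Dg (f x) o\<^sub>L Df x)"
      using Df(2) by (auto intro!: continuous_intros simp: o_def)
  qed
qed

lemma C1_on_const: "C1_on S (\<lambda>x. c)"
  by (rule C1_onI[where D="\<lambda>x. 0"]) (auto intro!: derivative_eq_intros continuous_intros)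

lemma C1_on_add:
  fixes f g :: "'a::real_normed_vector \<Rightarrow> 'b::real_normed_vector"
  assumes "C1_on S f" "C1_on S g"
  shows "C1_on S (\<lambda>x. f x + g x)"
proof -
  obtain Df where Df: "\<forall>x\<in>S. (f has_derivative blinfun_apply (Df x)) (at x)" "continuous_on S Df"
    using assms(1) unfolding C1_on_def by blast
  obtain Dg where Dg: "\<forall>x\<in>S. (g has_derivative blinfun_apply (Dg x)) (at x)" "continuous_on S Dg"
    using assms(2) unfolding C1_on_def by blast
  show ?thesis
    by (rule C1_onI[where D="\<lambda>x. Df x + Dg x"])
     (use Df Dg in \<open>auto intro!: continuous_intros derivative_eq_intros simp: blinfun.add_left\<close>)
qed

lemma C1_on_sum:
  fixes f :: "'i \<Rightarrow> 'a::real_normed_vector \<Rightarrow> 'b::real_normed_vector"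
  assumes "finite I" "\<And>i. i \<in> I \<Longrightarrow> C1_on S (f i)"
  shows "C1_on S (\<lambda>x. \<Sum>i\<in>I. f i x)"
  using assms by (induction I rule: finite_induct) (auto intro: C1_on_add C1_on_const)

lemma C1_on_mult:
  fixes f g :: "'a::real_normed_vector \<Rightarrow> real"
  assumes "C1_on S f" "C1_on S g"
  shows "C1_on S (\<lambda>x. f x * g x)"
proof -
  obtain Df where Df: "\<forall>x\<in>S. (f has_derivative blinfun_apply (Df x)) (at x)" "continuous_on S Df"
    using assms(1) unfolding C1_on_def by blast
  obtain Dg where Dg: "\<forall>x\<in>S. (g has_derivative blinfun_apply (Dg x)) (at x)" "continuous_on S Dg"
    using assms(2) unfolding C1_on_def by blast
  have cf: "continuous_on S f"
    using Df(1) has_derivative_continuous continuous_at_imp_continuous_on by blast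
  have cg: "continuous_on S g"
    using Dg(1) has_derivative_continuous continuous_at_imp_continuous_on by blast
  show ?thesis
  proof (rule C1_onI[where D="\<lambda>x. f x *\<^sub>R Dg x + g x *\<^sub>R Df x"])
    fix x assume x: "x \<in> S"
    show "((\<lambda>x. f x * g x) has_derivative blinfun_apply (f x *\<^sub>R Dg x + g x *\<^sub>R Df x)) (at x)"
      by (rule has_derivative_eq_rhs[OF has_derivative_mult[OF Df(1)[rule_format, OF x] Dg(1)[rule_format, OF x]]])
        (rule ext, simp add: blinfun.add_left blinfun.scaleR_left)
  next
    show "continuous_on S (\<lambda>x. f x *\<^sub>R Dg x + g x *\<^sub>R Df x)"
      using Df(2) Dg(2) cf cg by (auto intro!: continuous_intros)
  qed
qed

lemma C1_on_divide:
  fixes f g :: "'a::real_normed_vector \<Rightarrow> real"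
  assumes "C1_on S f" "C1_on S g" "\<And>x. x \<in> S \<Longrightarrow> g x \<noteq> 0"
  shows "C1_on S (\<lambda>x. f x / g x)"
proof -
  obtain Df where Df: "\<forall>x\<in>S. (f has_derivative blinfun_apply (Df x)) (at x)" "continuous_on S Df"
    using assms(1) unfolding C1_on_def by blast
  obtain Dg where Dg: "\<forall>x\<in>S. (g has_derivative blinfun_apply (Dg x)) (at x)" "continuous_on S Dg"
    using assms(2) unfolding C1_on_def by blast
  have cf: "continuous_on S f"
    using Df(1) has_derivative_continuous continuous_at_imp_continuous_on by blast
  have cg: "continuous_on S g"
    using Dg(1) has_derivative_continuous continuous_at_imp_continuous_on by blast
  show ?thesis
  proof (rule C1_onI[where D="\<lambda>x. (1 / g x) *\<^sub>R Df x - (f x / (g x)^2) *\<^sub>R Dg x"])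
    fix x assume x: "x \<in> S"
    show "((\<lambda>x. f x / g x) has_derivative blinfun_apply ((1 / g x) *\<^sub>R Df x - (f x / (g x)^2) *\<^sub>R Dg x)) (at x)"
      by (rule has_derivative_eq_rhs[OF has_derivative_divide[OF Df(1)[rule_format, OF x] Dg(1)[rule_format, OF x] assms(3)[OF x]]])
        (use assms(3)[OF x] in \<open>auto simp: blinfun.diff_left blinfun.scaleR_left field_simps power2_eq_square\<close>)
  next
    show "continuous_on S (\<lambda>x. (1 / g x) *\<^sub>R Df x - (f x / (g x)^2) *\<^sub>R Dg x)"
      using Df(2) Dg(2) cf cg assms(3) by (auto intro!: continuous_intros)
  qed
qed

lemma C1_on_blinfun:
  "C1_on S (blinfun_apply L)"
  by (rule C1_onI[where D="\<lambda>x. L"]) (auto intro: bounded_linear_imp_has_derivative blinfun.bounded_linear_right continuous_intros)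

definition C1_fun_on :: "('m::topological_space set \<times> ('m \<Rightarrow> 'x::banach)) set \<Rightarrow> 'm set \<Rightarrow> ('m \<Rightarrow> real) \<Rightarrow> bool" where
  "C1_fun_on A W F \<longleftrightarrow> (\<forall>(V,\<psi>)\<in>A. C1_on (\<psi> ` (V \<inter> W)) (F \<circ> inv_into V \<psi>))"

lemma chart_open_image:
  assumes "is_chart V \<psi>" "open W"
  shows "open (\<psi> ` (V \<inter> W))"
proof -
  have c: "continuous_on (\<psi> ` V) (inv_into V \<psi>)" "open (\<psi> ` V)" "inj_on \<psi> V" "open V"
    using assms(1) unfolding is_chart_def by auto
  have eq: "\<psi> ` (V \<inter> W) = \<psi> ` V \<inter> inv_into V \<psi> -` (V \<inter> W)"
    using inv_into_f_f[OF c(3)] by force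
  have "open (inv_into V \<psi> -` (V \<inter> W) \<inter> \<psi> ` V)"
    using c(1,2) continuous_on_open_vimage open_Int[OF c(4) assms(2)] by blast
  then show ?thesis using eq by (simp add: Int_commute)
qed

lemma C1_fun_iff: "C1_fun A F \<longleftrightarrow> C1_fun_on A UNIV F"
  unfolding C1_fun_def C1_fun_on_def by simp

lemma C1_fun_on_subset: "C1_fun_on A W F \<Longrightarrow> W' \<subseteq> W \<Longrightarrow> C1_fun_on A W' F"
  unfolding C1_fun_on_def by (auto intro: C1_on_subset)

lemma C1_fun_on_local:
  assumes A: "C1_atlas A" and loc: "\<And>m. \<exists>W. open W \<and> m \<in> W \<and> C1_fun_on A W F"
  shows "C1_fun A F"
  unfolding C1_fun_def
proof safe
  fix V \<psi> assume V: "(V, \<psi>) \<in> A"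
  have ch: "is_chart V \<psi>" using A V unfolding C1_atlas_def by auto
  let ?S = "{\<psi> ` (V \<inter> W) | W. open W \<and> C1_fun_on A W F}"
  have "\<psi> ` V = \<Union>?S"
  proof safe
    fix v assume "v \<in> V"
    then obtain W where "open W" "v \<in> W" "C1_fun_on A W F" using loc by blast
    then show "\<psi> v \<in> \<Union>?S" using \<open>v \<in> V\<close> by blast
  qed auto
  moreover have "C1_on (\<Union>?S) (F \<circ> inv_into V \<psi>)"
    by (rule C1_on_Union) (use chart_open_image[OF ch] V in \<open>auto simp: C1_fun_on_def\<close>)
  ultimately show "C1_on (\<psi> ` V) (F \<circ> inv_into V \<psi>)" by simp
qed

lemma C1_fun_on_cong:
  assumes A: "C1_atlas A" and "C1_fun_on A W F" "open W" "\<And>m. m \<in> W \<Longrightarrow> F m = G m"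
  shows "C1_fun_on A W G"
  unfolding C1_fun_on_def
proof safe
  fix V \<psi> assume V: "(V, \<psi>) \<in> A"
  have ch: "is_chart V \<psi>" using A V unfolding C1_atlas_def by auto
  then have inj: "inj_on \<psi> V" unfolding is_chart_def by auto
  show "C1_on (\<psi> ` (V \<inter> W)) (G \<circ> inv_into V \<psi>)"
    by (rule C1_on_cong[of _ "F \<circ> inv_into V \<psi>"])
      (use assms V chart_open_image[OF ch] inv_into_f_f[OF inj] in \<open>auto simp: C1_fun_on_def\<close>)
qed

lemma C1_fun_on_const: "C1_fun_on A W (\<lambda>m. c)"
  unfolding C1_fun_on_def by (auto simp: o_def intro: C1_on_const)

lemma C1_fun_on_add: "C1_fun_on A W F \<Longrightarrow> C1_fun_on A W G \<Longrightarrow> C1_fun_on A W (\<lambda>m. F m + G m)"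
  unfolding C1_fun_on_def by (auto simp: o_def intro!: C1_on_add[simplified])

lemma C1_fun_on_mult: "C1_fun_on A W F \<Longrightarrow> C1_fun_on A W G \<Longrightarrow> C1_fun_on A W (\<lambda>m. F m * G m)"
  unfolding C1_fun_on_def by (auto simp: o_def intro!: C1_on_mult[simplified])

lemma C1_fun_on_sum:
  "finite I \<Longrightarrow> (\<And>i. i \<in> I \<Longrightarrow> C1_fun_on A W (F i)) \<Longrightarrow> C1_fun_on A W (\<lambda>m. \<Sum>i\<in>I. F i m)"
  by (induction I rule: finite_induct) (auto intro: C1_fun_on_add C1_fun_on_const)

lemma C1_fun_on_divide:
  assumes A: "C1_atlas A" and "C1_fun_on A W F" "C1_fun_on A W G" "\<And>m. m \<in> W \<Longrightarrow> G m \<noteq> 0"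
  shows "C1_fun_on A W (\<lambda>m. F m / G m)"
  unfolding C1_fun_on_def
proof safe
  fix V \<psi> assume V: "(V, \<psi>) \<in> A"
  have ch: "is_chart V \<psi>" using A V unfolding C1_atlas_def by auto
  then have inj: "inj_on \<psi> V" unfolding is_chart_def by auto
  have "C1_on (\<psi> ` (V \<inter> W)) (\<lambda>y. (F \<circ> inv_into V \<psi>) y / (G \<circ> inv_into V \<psi>) y)"
  proof (rule C1_on_divide)
    show "C1_on (\<psi> ` (V \<inter> W)) (F \<circ> inv_into V \<psi>)" "C1_on (\<psi> ` (V \<inter> W)) (G \<circ> inv_into V \<psi>)"
      using assms(2,3) V unfolding C1_fun_on_def by auto
    show "\<And>x. x \<in> \<psi> ` (V \<inter> W) \<Longrightarrow> (G \<circ> inv_into V \<psi>) x \<noteq> 0"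
      using assms(4) inv_into_f_f[OF inj] by auto
  qed
  then show "C1_on (\<psi> ` (V \<inter> W)) ((\<lambda>m. F m / G m) \<circ> inv_into V \<psi>)"
    by (simp add: o_def)
qed

lemma C1_fun_on_chart:
  assumes A: "C1_atlas A" and U: "atlas_chart A U \<phi>" and W: "open W" "W \<subseteq> U"
    and g: "C1_on (\<phi> ` W) g"
  shows "C1_fun_on A W (\<lambda>m. g (\<phi> m))"
  unfolding C1_fun_on_def
proof safe
  fix V \<psi> assume V: "(V, \<psi>) \<in> A"
  have ch: "is_chart V \<psi>" using A V unfolding C1_atlas_def by auto
  then have inj: "inj_on \<psi> V" unfolding is_chart_def by auto
  have "C1_compatible U \<phi> V \<psi>" using U V unfolding atlas_chart_def by auto
  then have t: "C1_on (\<psi> ` (U \<inter> V)) (\<phi> \<circ> inv_into V \<psi>)" unfolding C1_compatible_def by auto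
  have "C1_on (\<psi> ` (V \<inter> W)) (g \<circ> (\<phi> \<circ> inv_into V \<psi>))"
  proof (rule C1_on_compose[OF C1_on_subset[OF t] g])
    show "\<psi> ` (V \<inter> W) \<subseteq> \<psi> ` (U \<inter> V)" using W by auto
    show "(\<phi> \<circ> inv_into V \<psi>) ` \<psi> ` (V \<inter> W) \<subseteq> \<phi> ` W"
      using inv_into_f_f[OF inj] by auto
  qed
  then show "C1_on (\<psi> ` (V \<inter> W)) ((\<lambda>m. g (\<phi> m)) \<circ> inv_into V \<psi>)" by (simp add: o_def)
qed

lemma atlas_chart_of_A:
  assumes "C1_atlas A" "(U, \<phi>) \<in> A" shows "atlas_chart A U \<phi>"
  using assms unfolding C1_atlas_def atlas_chart_def by auto

lemma paracompact_regular:
  assumes P: "paracompact_space TYPE('m::topological_space)" and Om: "open Om" "(p::'m) \<in> Om"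
  shows "\<exists>G. open G \<and> p \<in> G \<and> closure G \<subseteq> Om"
proof -
  have haus: "\<And>x y::'m. x \<noteq> y \<Longrightarrow> \<exists>U V. open U \<and> open V \<and> x \<in> U \<and> y \<in> V \<and> U \<inter> V = {}"
    using P unfolding paracompact_space_def by blast
  have ref: "\<And>\<U> :: 'm set set. (\<forall>U\<in>\<U>. open U) \<Longrightarrow> \<Union>\<U> = UNIV \<Longrightarrow>
        (\<exists>\<V>. (\<forall>V\<in>\<V>. open V) \<and> \<Union>\<V> = UNIV \<and> (\<forall>V\<in>\<V>. \<exists>U\<in>\<U>. V \<subseteq> U) \<and>
             locally_finite_family \<V>)"
    using P unfolding paracompact_space_def by blast
  define \<U> where "\<U> = insert Om {U. open U \<and> p \<notin> closure U}"
  have cov: "\<Union>\<U> = UNIV"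
  proof safe
    fix c :: 'm
    show "c \<in> \<Union>\<U>"
    proof (cases "c \<in> Om")
      case True then show ?thesis unfolding \<U>_def by blast
    next
      case False
      then have "c \<noteq> p" using Om by blast
      then obtain U W where UW: "open U" "open W" "c \<in> U" "p \<in> W" "U \<inter> W = {}" using haus[of c p] by metis
      then have "p \<notin> closure U" by (metis disjoint_iff open_Int_closure_eq_empty)
      then have "U \<in> \<U>" unfolding \<U>_def using UW(1) by simp
      then show ?thesis using UW(3) by blast
    qed
  qed simp
  obtain \<V> where V: "\<forall>V\<in>\<V>. open V" "\<Union>\<V> = UNIV" "\<forall>V\<in>\<V>. \<exists>U\<in>\<U>. V \<subseteq> U" "locally_finite_family \<V>"
    using ref[of \<U>] cov Om unfolding \<U>_def by auto
  define E where "E = \<Union>{V\<in>\<V>. V - Om \<noteq> {}}"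
  have Eo: "open E" unfolding E_def using V(1) by auto
  have CE: "- Om \<subseteq> E"
  proof
    fix x assume x: "x \<in> - Om"
    have "x \<in> \<Union>\<V>" using V(2) by simp
    then obtain V where "V \<in> \<V>" "x \<in> V" by blast
    then show "x \<in> E" unfolding E_def using x by (intro UnionI[of V]) auto
  qed
  have pc: "p \<notin> closure V" if VV: "V \<in> \<V>" "V - Om \<noteq> {}" for V
  proof -
    obtain U where U: "U \<in> \<U>" "V \<subseteq> U" using V(3) VV(1) by metis
    then have "U \<noteq> Om" using VV(2) by auto
    then have "p \<notin> closure U" using U unfolding \<U>_def by blast
    then show ?thesis using closure_mono[OF U(2)] by blast
  qed
  obtain W where W: "open W" "p \<in> W" "finite {V \<in> \<V>. V \<inter> W \<noteq> {}}"
    using V(4) unfolding locally_finite_family_def by blast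
  define F where "F = {V \<in> \<V>. V \<inter> W \<noteq> {} \<and> V - Om \<noteq> {}}"
  have Ff: "finite F" unfolding F_def by (rule finite_subset[OF _ W(3)]) blast
  define W' where "W' = W - \<Union>(closure ` F)"
  have W'o: "open W'" unfolding W'_def using Ff W(1) by (intro open_Diff closed_Union) auto
  have pW': "p \<in> W'" unfolding W'_def F_def using W(2) pc by blast
  have "W' \<inter> E = {}"
  proof -
    { fix x V assume x: "x \<in> W'" "x \<in> V" "V \<in> \<V>" "V - Om \<noteq> {}"
      then have "V \<in> F" unfolding F_def W'_def by blast
      then have False using x closure_subset unfolding W'_def by blast }
    then show ?thesis unfolding E_def by blast
  qed
  then have "p \<notin> closure E" using W'o pW' by (metis disjoint_iff open_Int_closure_eq_empty)
  moreover have "closure (- closure E) \<subseteq> Om"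
  proof -
    have "(- closure E) \<inter> E = {}" using closure_subset by blast
    then have "closure (- closure E) \<inter> E = {}"
      using Eo by (metis Int_commute open_Int_closure_eq_empty)
    then show ?thesis using CE by blast
  qed
  ultimately show ?thesis by (intro exI[of _ "- closure E"]) auto
qed

lemma Lip_le: "lipschitz_on L UNIV f \<Longrightarrow> Lip f \<le> L"
  unfolding Lip_def by (rule cInf_lower) (auto intro: bdd_belowI[where m=0] lipschitz_on_nonneg)

lemma Lip_nonneg: "lipschitz_on L UNIV f \<Longrightarrow> 0 \<le> Lip f"
  unfolding Lip_def by (rule cInf_greatest) (auto intro: lipschitz_on_nonneg)

lemma deriv_bound_lip:
  fixes K :: "'a::real_normed_vector \<Rightarrow> 'b::real_normed_vector"
  assumes L: "lipschitz_on L UNIV K" and D: "(K has_derivative D) (at x)"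
  shows "norm (D v) \<le> L * norm v"
proof (cases "v = 0")
  case True
  then show ?thesis using D has_derivative_bounded_linear linear_simps(3) by (metis bounded_linear.linear norm_zero mult_zero_right order_refl)
next
  case False
  have bl: "bounded_linear D" using D has_derivative_bounded_linear by blast
  have "norm (D v) \<le> L * norm v + e" if e: "e > 0" for e
  proof -
    define e' where "e' = e / norm v"
    have e': "e' > 0" using e False unfolding e'_def by simp
    obtain d where d: "d > 0" "\<forall>y. norm (y - x) < d \<longrightarrow> norm (K y - K x - D (y - x)) \<le> e' * norm (y - x)"
      using D e' unfolding has_derivative_at_alt by blast
    define t where "t = d / (2 * norm v)"
    have t: "t > 0" using d False unfolding t_def by simp
    have tn: "norm (t *\<^sub>R v) < d" using d False t unfolding t_def by (simp add: field_simps)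
    have 1: "norm (K (x + t *\<^sub>R v) - K x - D (t *\<^sub>R v)) \<le> e' * norm (t *\<^sub>R v)"
      using d(2)[rule_format, of "x + t *\<^sub>R v"] tn by simp
    have 2: "norm (K (x + t *\<^sub>R v) - K x) \<le> L * norm (t *\<^sub>R v)"
      using lipschitz_onD[OF L, of "x + t *\<^sub>R v" x] by (simp add: dist_norm)
    have "norm (D (t *\<^sub>R v)) \<le> norm (K (x + t *\<^sub>R v) - K x) + norm (K (x + t *\<^sub>R v) - K x - D (t *\<^sub>R v))"
      by (metis add.commute diff_add_cancel norm_minus_commute norm_triangle_ineq4 add_diff_cancel_left')
    also have "\<dots> \<le> L * norm (t *\<^sub>R v) + e' * norm (t *\<^sub>R v)" using 1 2 by linarith
    finally have "t * norm (D v) \<le> t * (L * norm v + e' * norm v)"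
      using t by (simp add: linear_scale[OF bounded_linear.linear[OF bl]] algebra_simps)
    then have "norm (D v) \<le> L * norm v + e' * norm v" using t by simp
    then show ?thesis unfolding e'_def using False by simp
  qed
  then show ?thesis using field_le_epsilon by blast
qed

lemma deriv_bound_Lip:
  fixes K :: "'a::real_normed_vector \<Rightarrow> 'b::real_normed_vector"
  assumes L: "lipschitz_on L UNIV K" and D: "(K has_derivative D) (at x)"
  shows "norm (D v) \<le> Lip K * norm v"
proof (cases "v = 0")
  case True
  then show ?thesis using deriv_bound_lip[OF L D, of v] by simp
next
  case False
  have "norm (D v) / norm v \<le> Lip K"
    unfolding Lip_def
  proof (rule cInf_greatest)
    show "{L. lipschitz_on L UNIV K} \<noteq> {}" using L by blast
    fix L' assume "L' \<in> {L. lipschitz_on L UNIV K}"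
    then show "norm (D v) / norm v \<le> L'" using deriv_bound_lip[of L' K D x v] D False
      by (simp add: divide_le_eq)
  qed
  then show ?thesis using False by (simp add: divide_le_eq mult.commute)
qed

definition theta :: "real \<Rightarrow> real" where "theta t = (max 0 (t - 1/4))^2"
definition theta' :: "real \<Rightarrow> real" where "theta' t = 2 * max 0 (t - 1/4)"

lemma theta_deriv: "(theta has_real_derivative theta' t) (at t)"
proof -
  consider "t < 1/4" | "t > 1/4" | "t = 1/4" by linarith
  then show ?thesis
  proof cases
    case 1
    have "((\<lambda>s. 0) has_real_derivative theta' t) (at t)" using 1 by (simp add: theta'_def)
    then show ?thesis
      by (rule has_field_derivative_transform_within_open[where S="{..<1/4}"]) (use 1 in \<open>auto simp: theta_def theta'_def\<close>)
  next
    case 2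
    have "((\<lambda>s. (s - 1/4)^2) has_real_derivative theta' t) (at t)"
      using 2 by (auto intro!: derivative_eq_intros simp: theta'_def)
    then show ?thesis
      by (rule has_field_derivative_transform_within_open[where S="{1/4<..}"]) (use 2 in \<open>auto simp: theta_def theta'_def\<close>)
  next
    case 3
    have "(theta has_derivative (\<lambda>h. theta' t * h)) (at t)"
      unfolding has_derivative_at_alt
    proof (intro conjI allI impI)
      show "bounded_linear ((*) (theta' t))" by (simp add: bounded_linear_mult_right)
      fix e :: real assume e: "e > 0"
      show "\<exists>d>0. \<forall>y. norm (y - t) < d \<longrightarrow> norm (theta y - theta t - theta' t * (y - t)) \<le> e * norm (y - t)"
      proof (intro exI[of _ e] conjI allI impI)
        fix y assume y: "norm (y - t) < e"
        have "theta y \<le> (y - t)^2" unfolding theta_def using 3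
          by (metis abs_le_square_iff abs_of_nonneg abs_ge_self max_def order.trans diff_ge_0_iff_ge
              linorder_linear power2_abs abs_ge_zero power_mono zero_le_power2)
        also have "\<dots> = norm (y - t) * norm (y - t)" by (simp add: power2_eq_square abs_mult_self_eq)
        also have "\<dots> \<le> e * norm (y - t)" using y by (intro mult_right_mono) auto
        finally have "theta y \<le> e * norm (y - t)" .
        moreover have "theta t = 0" "theta' t = 0" "0 \<le> theta y" using 3 by (simp_all add: theta_def theta'_def)
        ultimately show "norm (theta y - theta t - theta' t * (y - t)) \<le> e * norm (y - t)"
          by simp
      qed (use e in auto)
    qed
    then show ?thesis by (simp add: has_field_derivative_def)
  qed
qed

lemma theta_comp:
  fixes K :: "'a::real_normed_vector \<Rightarrow> real"
  assumes d: "\<And>x. (K has_derivative blinfun_apply (DK x)) (at x)" and c: "continuous_on UNIV DK"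
  shows "((\<lambda>x. theta (K x)) has_derivative blinfun_apply (theta' (K x) *\<^sub>R DK x)) (at x)"
    and "continuous_on UNIV (\<lambda>x. theta' (K x) *\<^sub>R DK x)"
proof -
  have td: "(theta has_derivative (*) (theta' t)) (at t)" for t
    using theta_deriv[of t] unfolding has_field_derivative_def .
  show "((\<lambda>x. theta (K x)) has_derivative blinfun_apply (theta' (K x) *\<^sub>R DK x)) (at x)"
    by (rule has_derivative_eq_rhs[OF diff_chain_at[OF d td, unfolded o_def]]) (rule ext, simp add: blinfun.scaleR_left mult.commute)
  have cK: "continuous_on UNIV K"
    using d has_derivative_continuous continuous_at_imp_continuous_on by blast
  show "continuous_on UNIV (\<lambda>x. theta' (K x) *\<^sub>R DK x)"
    unfolding theta'_def using cK c by (auto intro!: continuous_intros)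
qed

lemma minus_min_le: "\<bar>min (1::real) a - min 1 b\<bar> \<le> \<bar>a - b\<bar>"
  by (auto simp: min_def)

lemma bump_X:
  fixes G :: "'x::banach set"
  assumes ps: "property_star TYPE('x)" and G: "open G"
  shows "\<exists>h::'x \<Rightarrow> real. C1_on UNIV h \<and> (\<forall>x. 0 \<le> h x) \<and> (\<forall>x. 0 < h x \<longleftrightarrow> x \<in> G)"
proof (cases "G = UNIV")
  case True
  have "C1_on UNIV (\<lambda>x::'x. 1::real)" by (rule C1_on_const)
  note c1 = this
  show ?thesis by (rule exI[where x="\<lambda>x::'x. 1::real"]) (use True c1 in auto)
next
  case False
  then have ne: "-G \<noteq> {}" by auto
  have cl: "closed (-G)" using G by auto
  obtain C0 where C0: "\<And>(f::'x\<Rightarrow>real) \<epsilon>. (\<exists>L. lipschitz_on L UNIV f) \<Longrightarrow> \<epsilon>>0 \<Longrightarrow>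
     (\<exists>K. (\<exists>L. lipschitz_on L UNIV K) \<and> C1_on UNIV K \<and> (\<forall>x. \<bar>f x - K x\<bar> < \<epsilon>) \<and> Lip K \<le> C0 * Lip f)"
    using ps unfolding property_star_def by blast
  define C where "C = \<bar>C0\<bar> + 1"
  have Cpos: "C > 0" "C \<ge> 1" unfolding C_def by auto
  define f where "f k x = min 1 (2^k * infdist x (-G))" for k :: nat and x
  have flip: "lipschitz_on (2^k) UNIV (f k)" for k
  proof (rule lipschitz_onI)
    fix x y :: 'x
    have "\<bar>infdist x (-G) - infdist y (-G)\<bar> \<le> dist x y" by (rule infdist_triangle_abs)
    then have "\<bar>2^k * infdist x (-G) - 2^k * infdist y (-G)\<bar> \<le> 2^k * dist x y"
      by (simp add: abs_mult right_diff_distrib[symmetric])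
    then show "dist (f k x) (f k y) \<le> 2^k * dist x y"
      unfolding f_def dist_real_def using minus_min_le order_trans by blast
  qed simp
  have f01: "0 \<le> f k x" "f k x \<le> 1" for k x unfolding f_def by (auto simp: infdist_nonneg)
  have "\<forall>k. \<exists>K. (\<exists>L. lipschitz_on L UNIV K) \<and> C1_on UNIV K \<and> (\<forall>x. \<bar>f k x - K x\<bar> < 1/4) \<and> Lip K \<le> C0 * Lip (f k)"
    using C0 flip by (metis divide_pos_pos zero_less_numeral zero_less_one)
  then obtain K where K: "\<And>k. (\<exists>L. lipschitz_on L UNIV (K k))" "\<And>k. C1_on UNIV (K k)"
     "\<And>k x. \<bar>f k x - K k x\<bar> < 1/4" "\<And>k. Lip (K k) \<le> C0 * Lip (f k)"
    by metis
  have LipK: "Lip (K k) \<le> C * 2^k" for k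
  proof -
    have "Lip (f k) \<le> 2^k" "0 \<le> Lip (f k)" using Lip_le[OF flip] Lip_nonneg[OF flip] by auto
    then have "C0 * Lip (f k) \<le> C * 2^k" unfolding C_def
      by (metis abs_ge_self abs_ge_zero add.commute less_add_one less_le_not_le mult_mono order_trans)
    then show ?thesis using K(4)[of k] by linarith
  qed
  have "\<forall>k. \<exists>D. (\<forall>x. (K k has_derivative blinfun_apply (D x)) (at x)) \<and> continuous_on UNIV D"
    using K(2) unfolding C1_on_def by blast
  then obtain DK where DK: "\<And>k x. (K k has_derivative blinfun_apply (DK k x)) (at x)" "\<And>k. continuous_on UNIV (DK k)"
    by metis
  have nDK: "norm (DK k x) \<le> C * 2^k" for k x
  proof (rule norm_blinfun_bound)
    show "0 \<le> C * 2^k" using Cpos by simp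
    fix v
    obtain L where L: "lipschitz_on L UNIV (K k)" using K(1) by blast
    show "norm (blinfun_apply (DK k x) v) \<le> C * 2^k * norm v"
      using deriv_bound_Lip[OF L DK(1)] LipK[of k] by (meson mult_right_mono norm_ge_zero order_trans)
  qed
  have Kb0: "-(1/4) < f k x - K k x \<and> f k x - K k x < 1/4" for k x using K(3)[of k x] unfolding abs_less_iff by linarith
  have Kb: "-1/4 < K k x" "K k x < 5/4" for k x using Kb0[of k x] f01[of k x] by linarith+
  have th01: "0 \<le> theta (K k x)" "theta (K k x) \<le> 1" for k x
  proof -
    show "0 \<le> theta (K k x)" unfolding theta_def by simp
    have "max 0 (K k x - 1/4) \<le> 1" "0 \<le> max 0 (K k x - 1/4)" using Kb[of k x] by auto
    then show "theta (K k x) \<le> 1" unfolding theta_def by (simp add: power_le_one)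
  qed
  have th'2: "0 \<le> theta' (K k x)" "theta' (K k x) \<le> 2" for k x using Kb[of k x] by (auto simp: theta'_def)
  define c where "c k = 1 / (C * 4^k)" for k :: nat
  have cpos: "c k > 0" for k unfolding c_def using Cpos by simp
  define T where "T k x = c k * theta (K k x)" for k x
  define DT where "DT k x = c k *\<^sub>R (theta' (K k x) *\<^sub>R DK k x)" for k x
  have dT: "(T k has_derivative blinfun_apply (DT k x)) (at x)" for k x
    unfolding T_def DT_def
    by (rule has_derivative_eq_rhs[OF has_derivative_mult_right[OF theta_comp(1)[OF DK(1) DK(2)]]])
      (rule ext, simp add: blinfun.scaleR_left)
  have cT: "continuous_on UNIV (DT k)" for k
    unfolding DT_def by (rule continuous_on_scaleR[OF continuous_on_const theta_comp(2)[OF DK(1) DK(2)]])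
  have nDT: "norm (DT k x) \<le> 2 * (1/2)^k" for k x
  proof -
    have "norm (DT k x) = c k * theta' (K k x) * norm (DK k x)"
      unfolding DT_def using cpos[of k] th'2[of k x] by simp
    also have "\<dots> \<le> c k * 2 * (C * 2^k)"
      using cpos[of k] th'2[of k x] nDK[of k x] by (simp add: mult_mono)
    also have "\<dots> = 2 * (1/2)^k"
      unfolding c_def using Cpos by (simp add: field_simps power_mult_distrib[symmetric])
    finally show ?thesis .
  qed
  have T01: "0 \<le> T k x" "T k x \<le> (1/4)^k" for k x
  proof -
    show "0 \<le> T k x" unfolding T_def using cpos[of k] th01[of k x] by simp
    have "T k x \<le> c k" unfolding T_def using cpos[of k] th01[of k x] by (simp add: mult_left_le)
    also have "c k \<le> (1/4)^k" unfolding c_def using Cpos by (simp add: field_simps)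
    finally show "T k x \<le> (1/4)^k" .
  qed
  have sumT: "summable (\<lambda>k. T k x)" for x
    by (rule summable_comparison_test'[where g="\<lambda>k. (1/4)^k"]) (use T01 in auto)
  have sum2: "summable (\<lambda>k. 2 * (1/2::real)^k)" by (simp add: summable_geometric)
  define D where "D x = suminf (\<lambda>k. DT k x)" for x
  have ul: "uniform_limit UNIV (\<lambda>n x. \<Sum>i<n. DT i x) D sequentially"
    unfolding D_def by (rule Weierstrass_m_test[OF nDT sum2])
  have cD: "continuous_on UNIV D"
    by (rule uniform_limit_theorem[OF _ ul]) (auto intro!: always_eventually continuous_on_sum cT)
  obtain g where g: "\<forall>x\<in>UNIV. (\<lambda>n. T n x) sums (g x) \<and> (g has_derivative blinfun_apply (D x)) (at x within UNIV)"
  proof (atomize_elim, rule has_derivative_series[where f'="\<lambda>n x. blinfun_apply (DT n x)"])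
    show "convex (UNIV::'x set)" by simp
    show "\<And>n x. x \<in> UNIV \<Longrightarrow> (T n has_derivative blinfun_apply (DT n x)) (at x within UNIV)"
      using dT by simp
    show "(\<lambda>n. T n 0) sums suminf (\<lambda>n. T n 0)" using sumT summable_sums by blast
    show "(0::'x) \<in> UNIV" by simp
    fix e :: real assume e: "e > 0"
    have "\<forall>\<^sub>F n in sequentially. \<forall>x\<in>UNIV. dist (\<Sum>i<n. DT i x) (D x) < e"
      using uniform_limitD[OF ul e] .
    then show "\<forall>\<^sub>F n in sequentially. \<forall>x\<in>UNIV. \<forall>h. norm ((\<Sum>i<n. blinfun_apply (DT i x) h) - blinfun_apply (D x) h) \<le> e * norm h"
    proof (rule eventually_mono, intro ballI allI)
      fix n x h assume H: "\<forall>x\<in>UNIV. dist (\<Sum>i<n. DT i x) (D x) < e"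
      have "(\<Sum>i<n. blinfun_apply (DT i x) h) - blinfun_apply (D x) h = blinfun_apply ((\<Sum>i<n. DT i x) - D x) h"
        by (simp add: blinfun.sum_left blinfun.diff_left)
      also have "norm \<dots> \<le> norm ((\<Sum>i<n. DT i x) - D x) * norm h" by (rule norm_blinfun)
      also have "\<dots> \<le> e * norm h" using H[rule_format, of x] by (intro mult_right_mono) (auto simp: dist_norm)
      finally show "norm ((\<Sum>i<n. blinfun_apply (DT i x) h) - blinfun_apply (D x) h) \<le> e * norm h" .
    qed
  qed
  have gC1: "C1_on UNIV g" using g cD unfolding C1_on_def by auto
  have geq: "g x = suminf (\<lambda>k. T k x)" for x using g sums_unique by blast
  have gnn: "0 \<le> g x" for x unfolding geq using sumT T01 by (simp add: suminf_nonneg)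
  have gpos: "0 < g x \<longleftrightarrow> x \<in> G" for x
  proof
    assume x: "0 < g x"
    show "x \<in> G"
    proof (rule ccontr)
      assume "x \<notin> G"
      then have "f k x = 0" for k unfolding f_def by simp
      then have "K k x < 1/4" for k using K(3)[of k x] by auto
      then have "T k x = 0" for k unfolding T_def theta_def by simp
      then have "g x = 0" unfolding geq by simp
      then show False using x by simp
    qed
  next
    assume x: "x \<in> G"
    have ip: "infdist x (-G) > 0" using infdist_pos_not_in_closed[OF cl ne] x by simp
    obtain k where k: "1 / infdist x (-G) < 2^k" using real_arch_pow[of 2 "1 / infdist x (-G)"] by auto
    then have "1 \<le> 2^k * infdist x (-G)" using ip by (simp add: field_simps)
    then have "f k x = 1" unfolding f_def by simp
    then have "K k x > 3/4" using Kb0[of k x] by linarith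
    then have "theta (K k x) > 0" unfolding theta_def by simp
    then have "T k x > 0" unfolding T_def using cpos[of k] by simp
    then show "0 < g x" unfolding geq by (rule suminf_pos2[OF sumT T01(1)])
  qed
  show ?thesis using gC1 gnn gpos by blast
qed

lemma proj_baire:
  fixes P :: "'x::banach \<Rightarrow> 'x"
  assumes lin: "linear P"
  shows "\<exists>n a \<delta>. \<delta> > 0 \<and> ball a \<delta> \<subseteq> closure {x. norm (P x) \<le> real n \<and> norm (x - P x) \<le> real n}"
proof (rule ccontr)
  define S where "S n = closure {x. norm (P x) \<le> real n \<and> norm (x - P x) \<le> real n}" for n
  assume nt: "\<not> ?thesis"
  have e: "interior (S n) = {}" for n
  proof -
    { fix a assume "a \<in> interior (S n)"
      then obtain \<delta> where "\<delta> > 0" "ball a \<delta> \<subseteq> S n" using mem_interior by blast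
      then have False using nt unfolding S_def by blast }
    then show ?thesis by blast
  qed
  have "euclidean interior_of \<Union>(range S) = {}"
  proof (rule Baire_category_alt)
    show "completely_metrizable_space (euclidean::'x topology) \<or> locally_compact_space (euclidean::'x topology) \<and> regular_space (euclidean::'x topology)"
      using completely_metrizable_space_euclidean by blast
    show "countable (range S)" by simp
    fix T assume "T \<in> range S"
    then obtain n where Tn: "T = S n" by blast
    have "closed T" unfolding Tn S_def by simp
    then show "closedin euclidean T \<and> euclidean interior_of T = {}"
      using e[of n] Tn closed_closedin by auto
  qed
  moreover have "\<Union>(range S) = UNIV"
  proof safe
    fix x :: 'x
    obtain n :: nat where "max (norm (P x)) (norm (x - P x)) \<le> real n" using real_arch_simple by blast
    then have "x \<in> {x. norm (P x) \<le> real n \<and> norm (x - P x) \<le> real n}" by simp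
    then have "x \<in> S n" unfolding S_def by (rule subsetD[OF closure_subset])
    then show "x \<in> \<Union>(range S)" by blast
  qed simp
  ultimately show False by simp
qed

lemma proj_approx:
  fixes P :: "'x::banach \<Rightarrow> 'x"
  assumes lin: "linear P"
  shows "\<exists>M>0. \<forall>x \<eta>. \<eta> > 0 \<longrightarrow> (\<exists>s. norm (P s) \<le> M * norm x \<and> norm (s - P s) \<le> M * norm x \<and> norm (x - s) < \<eta>)"
proof -
  obtain n a \<delta> where \<delta>: "\<delta> > 0" and ball: "ball a \<delta> \<subseteq> closure {x. norm (P x) \<le> real n \<and> norm (x - P x) \<le> real n}"
    using proj_baire[OF lin] by blast
  define S1 where "S1 = {x. norm (P x) \<le> real n \<and> norm (x - P x) \<le> real n}"
  define S2 where "S2 = {x. norm (P x) \<le> 2 * real n \<and> norm (x - P x) \<le> 2 * real n}"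
  have c0: "u \<in> closure S2" if u: "norm u < \<delta>" for u
    unfolding closure_approachable
  proof (intro allI impI)
    fix \<epsilon> :: real assume \<epsilon>: "\<epsilon> > 0"
    have "a + u \<in> ball a \<delta>" using u by (simp add: dist_norm)
    then have "a + u \<in> closure S1" unfolding S1_def by (rule subsetD[OF ball])
    then obtain s where s: "s \<in> S1" "dist s (a + u) < \<epsilon>/2" using \<epsilon> unfolding closure_approachable
      by (meson half_gt_zero)
    have "a \<in> ball a \<delta>" using \<delta> by simp
    then have "a \<in> closure S1" unfolding S1_def by (rule subsetD[OF ball])
    then obtain t where t: "t \<in> S1" "dist t a < \<epsilon>/2" using \<epsilon> unfolding closure_approachable
      by (meson half_gt_zero)
    have "norm (P (s - t)) \<le> 2 * real n"
    proof -
      have "norm (P (s - t)) = norm (P s - P t)" by (simp add: linear_diff[OF lin])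
      also have "\<dots> \<le> norm (P s) + norm (P t)" by (rule norm_triangle_ineq4)
      finally show ?thesis using s(1) t(1) unfolding S1_def by simp
    qed
    moreover have "norm ((s - t) - P (s - t)) \<le> 2 * real n"
    proof -
      have "norm ((s - t) - P (s - t)) = norm ((s - P s) - (t - P t))" by (simp add: linear_diff[OF lin] algebra_simps)
      also have "\<dots> \<le> norm (s - P s) + norm (t - P t)" by (rule norm_triangle_ineq4)
      finally show ?thesis using s(1) t(1) unfolding S1_def by simp
    qed
    ultimately have "s - t \<in> S2" unfolding S2_def by simp
    moreover have "dist (s - t) u < \<epsilon>"
    proof -
      have "dist (s - t) u = norm ((s - (a + u)) - (t - a))" by (simp add: dist_norm algebra_simps)
      also have "\<dots> \<le> norm (s - (a + u)) + norm (t - a)" by (rule norm_triangle_ineq4)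
      finally show ?thesis using s(2) t(2) by (simp add: dist_norm)
    qed
    ultimately show "\<exists>y\<in>S2. dist y u < \<epsilon>" by blast
  qed
  define M where "M = 4 * real n / \<delta> + 1"
  have Mpos: "M > 0" unfolding M_def using \<delta> by (simp add: add_nonneg_pos)
  have main: "\<exists>s. norm (P s) \<le> M * norm x \<and> norm (s - P s) \<le> M * norm x \<and> norm (x - s) < \<eta>"
    if \<eta>: "\<eta> > 0" for x \<eta>
  proof (cases "x = 0")
    case True
    then show ?thesis using \<eta> by (intro exI[of _ 0]) (simp add: linear_0[OF lin])
  next
    case False
    define c where "c = \<delta> / (2 * norm x)"
    have c: "c > 0" unfolding c_def using False \<delta> by simp
    have "norm (c *\<^sub>R x) < \<delta>" unfolding c_def using False \<delta> by simp
    then have "c *\<^sub>R x \<in> closure S2" by (rule c0)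
    then obtain s' where s': "s' \<in> S2" "dist s' (c *\<^sub>R x) < \<eta> * c"
      unfolding closure_approachable using \<eta> c by (meson mult_pos_pos)
    define s where "s = (1/c) *\<^sub>R s'"
    have Ps: "P s = (1/c) *\<^sub>R P s'" unfolding s_def by (simp add: linear_scale[OF lin])
    have bnd: "2 * real n / c \<le> M * norm x"
    proof -
      have "2 * real n / c = (4 * real n / \<delta>) * norm x" unfolding c_def using False \<delta> by (simp add: field_simps)
      also have "\<dots> \<le> M * norm x" unfolding M_def by (rule mult_right_mono) auto
      finally show ?thesis .
    qed
    have "norm (P s) = norm (P s') / c" using c Ps by simp
    also have "\<dots> \<le> 2 * real n / c" using s'(1) c unfolding S2_def by (simp add: divide_right_mono)
    finally have 1: "norm (P s) \<le> M * norm x" using bnd by linarith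
    have "s - P s = (1/c) *\<^sub>R (s' - P s')" using Ps unfolding s_def by (simp add: algebra_simps)
    then have "norm (s - P s) = norm (s' - P s') / c" using c by simp
    also have "\<dots> \<le> 2 * real n / c" using s'(1) c unfolding S2_def by (simp add: divide_right_mono)
    finally have 2: "norm (s - P s) \<le> M * norm x" using bnd by linarith
    have "x - s = (1/c) *\<^sub>R (c *\<^sub>R x - s')" unfolding s_def using c by (simp add: algebra_simps)
    then have "norm (x - s) = dist s' (c *\<^sub>R x) / c" using c by (simp add: dist_norm norm_minus_commute)
    also have "\<dots> < \<eta>" using s'(2) c by (simp add: divide_less_eq)
    finally have 3: "norm (x - s) < \<eta>" .
    show ?thesis using 1 2 3 by blast
  qed
  show ?thesis using Mpos main by blast
qed

lemma proj_bounded: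
  fixes P :: "'x::banach \<Rightarrow> 'x"
  assumes lin: "linear P" and Y: "subspace Y" "closed Y" and Z: "subspace Z" "closed Z"
    and PY: "\<And>x. P x \<in> Y" "\<And>x. x - P x \<in> Z"
    and uniq: "\<And>x y. y \<in> Y \<Longrightarrow> x - y \<in> Z \<Longrightarrow> P x = y"
  shows "bounded_linear P"
proof -
  obtain M where M: "M > 0" "\<And>x \<eta>. \<eta> > 0 \<Longrightarrow> \<exists>s. norm (P s) \<le> M * norm x \<and> norm (s - P s) \<le> M * norm x \<and> norm (x - s) < \<eta>"
    using proj_approx[OF lin] by blast
  define sf where "sf x \<eta> = (SOME s. norm (P s) \<le> M * norm x \<and> norm (s - P s) \<le> M * norm x \<and> norm (x - s) < \<eta>)" for x \<eta>
  have sf: "norm (P (sf x \<eta>)) \<le> M * norm x \<and> norm (sf x \<eta> - P (sf x \<eta>)) \<le> M * norm x \<and> norm (x - sf x \<eta>) < \<eta>"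
    if "\<eta> > 0" for x \<eta>
    unfolding sf_def by (rule someI_ex[OF M(2)[OF that]])
  have bnd: "norm (P x) \<le> norm x * (2 * M)" for x
  proof (cases "x = 0")
    case True then show ?thesis by (simp add: linear_0[OF lin])
  next
    case False
    define \<eta> where "\<eta> i = norm x / 2 ^ Suc i" for i :: nat
    have \<eta>pos: "\<eta> i > 0" for i unfolding \<eta>_def using False by simp
    define r where "r = rec_nat x (\<lambda>i ri. ri - sf ri (\<eta> i))"
    have r0: "r 0 = x" and rS: "r (Suc i) = r i - sf (r i) (\<eta> i)" for i unfolding r_def by simp_all
    define s where "s i = sf (r i) (\<eta> i)" for i
    have rnorm: "norm (r i) \<le> norm x / 2 ^ i" for i
    proof (cases i)
      case 0 then show ?thesis using r0 by simp
    next
      case (Suc j)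
      have "norm (r (Suc j)) < \<eta> j" using sf[OF \<eta>pos[of j], of "r j"] rS[of j] by simp
      then show ?thesis using Suc unfolding \<eta>_def by simp
    qed
    have sP: "norm (P (s i)) \<le> M * norm x * (1/2)^i" and sZ: "norm (s i - P (s i)) \<le> M * norm x * (1/2)^i" for i
    proof -
      have "M * norm (r i) \<le> M * (norm x / 2 ^ i)" using rnorm[of i] M(1) by (intro mult_left_mono) auto
      also have "\<dots> = M * norm x * (1/2)^i" by (simp add: power_one_over field_simps)
      finally have *: "M * norm (r i) \<le> M * norm x * (1/2)^i" .
      show "norm (P (s i)) \<le> M * norm x * (1/2)^i" using sf[OF \<eta>pos[of i], of "r i"] * unfolding s_def by linarith
      show "norm (s i - P (s i)) \<le> M * norm x * (1/2)^i" using sf[OF \<eta>pos[of i], of "r i"] * unfolding s_def by linarith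
    qed
    have geo: "summable (\<lambda>i. M * norm x * (1/2::real)^i)" by (simp add: summable_geometric)
    have sumP: "summable (\<lambda>i. P (s i))"
      by (rule summable_comparison_test[OF _ geo]) (use sP in auto)
    have sumPn: "summable (\<lambda>i. norm (P (s i)))"
      by (rule summable_comparison_test[OF _ geo]) (use sP in auto)
    have sumZ: "summable (\<lambda>i. s i - P (s i))"
      by (rule summable_comparison_test[OF _ geo]) (use sZ in auto)
    have partial: "(\<Sum>i<n. s i) = x - r n" for n
      by (induction n) (simp_all add: r0 rS s_def)
    have rlim: "r \<longlonglongrightarrow> 0"
    proof (rule tendsto_norm_zero_cancel, rule Lim_null_comparison[where g="\<lambda>i. norm x * (1/2)^i"])
      show "\<forall>\<^sub>F i in sequentially. norm (norm (r i)) \<le> norm x * (1/2)^i"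
      proof (rule always_eventually, rule allI)
        fix i
        have "norm x * (1/2)^i = norm x / 2^i" by (simp add: power_one_over)
        then show "norm (norm (r i)) \<le> norm x * (1/2)^i" using rnorm[of i] by simp
      qed
      show "(\<lambda>i. norm x * (1/2::real)^i) \<longlonglongrightarrow> 0"
        by (intro tendsto_mult_right_zero LIMSEQ_power_zero) simp
    qed
    have sx: "s sums x"
    proof -
      have "(\<lambda>n. x - r n) \<longlonglongrightarrow> x - 0" by (rule tendsto_diff[OF tendsto_const rlim])
      then show ?thesis unfolding sums_def partial by simp
    qed
    have s2: "(\<lambda>i. P (s i) + (s i - P (s i))) sums (suminf (\<lambda>i. P (s i)) + suminf (\<lambda>i. s i - P (s i)))"
      by (intro sums_add summable_sums sumP sumZ)
    have "(\<lambda>i. P (s i) + (s i - P (s i))) = s" by (rule ext) simp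
    then have "s sums (suminf (\<lambda>i. P (s i)) + suminf (\<lambda>i. s i - P (s i)))" using s2 by simp
    then have xsum: "x = suminf (\<lambda>i. P (s i)) + suminf (\<lambda>i. s i - P (s i))"
      by (rule sums_unique2[OF sx])
    have yY: "suminf (\<lambda>i. P (s i)) \<in> Y"
    proof (rule closed_sequentially[OF Y(2) _ summable_LIMSEQ[OF sumP]])
      show "(\<Sum>i<n. P (s i)) \<in> Y" for n using PY(1) Y(1) by (simp add: subspace_sum)
    qed
    have zZ: "suminf (\<lambda>i. s i - P (s i)) \<in> Z"
    proof (rule closed_sequentially[OF Z(2) _ summable_LIMSEQ[OF sumZ]])
      show "(\<Sum>i<n. s i - P (s i)) \<in> Z" for n using PY(2) Z(1) by (simp add: subspace_sum)
    qed
    have "P x = suminf (\<lambda>i. P (s i))"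
      by (rule uniq[OF yY]) (metis xsum zZ add_diff_cancel_left')
    then have "norm (P x) \<le> (\<Sum>i. norm (P (s i)))" using summable_norm[OF sumPn] by simp
    also have "\<dots> \<le> (\<Sum>i. M * norm x * (1/2)^i)"
      by (rule suminf_le[OF _ sumPn geo]) (use sP in auto)
    also have "\<dots> = M * norm x * 2"
      by (simp add: suminf_mult suminf_geometric)
    finally show ?thesis by (simp add: algebra_simps)
  qed
  show ?thesis
    by (rule bounded_linear_intro[of P "2 * M"]) (use lin bnd in \<open>auto simp: linear_add linear_scale\<close>)
qed

lemma split_projection:
  fixes Y :: "'x::banach set"
  assumes "split_subspace Y"
  shows "\<exists>P. bounded_linear P \<and> (\<forall>x. P x \<in> Y) \<and> (\<forall>y\<in>Y. P y = y)"
proof -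
  obtain Z where Y: "subspace Y" "closed Y" and Z: "subspace Z" "closed Z" "Y \<inter> Z = {0}"
    and dec: "\<And>x. \<exists>y\<in>Y. \<exists>z\<in>Z. x = y + z"
    using assms unfolding split_subspace_def by blast
  have uq: "y1 = y2" if "y1 \<in> Y" "y2 \<in> Y" "x - y1 \<in> Z" "x - y2 \<in> Z" for x y1 y2
  proof -
    have "y1 - y2 \<in> Y" using that Y(1) by (simp add: subspace_diff)
    moreover have "y1 - y2 \<in> Z" using subspace_diff[OF Z(1) that(4) that(3)] by (simp add: algebra_simps)
    ultimately have "y1 - y2 \<in> Y \<inter> Z" by (rule IntI)
    then have "y1 - y2 = 0" unfolding Z(3) by (rule singletonD)
    then show ?thesis by simp
  qed
  define P where "P x = (SOME y. y \<in> Y \<and> x - y \<in> Z)" for x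
  have PY: "P x \<in> Y \<and> x - P x \<in> Z" for x
  proof -
    obtain y z where "y \<in> Y" "z \<in> Z" "x = y + z" using dec[of x] by blast
    then have "\<exists>y. y \<in> Y \<and> x - y \<in> Z" by (intro exI[of _ y]) simp
    then show ?thesis unfolding P_def by (rule someI_ex)
  qed
  have uniq: "P x = y" if "y \<in> Y" "x - y \<in> Z" for x y
  proof -
    have "P x \<in> Y" "x - P x \<in> Z" using PY[of x] by auto
    then show ?thesis using uq[of "P x" y x] that by simp
  qed
  have lin: "linear P"
  proof (rule linearI)
    fix a b
    show "P (a + b) = P a + P b"
    proof (rule uniq)
      show "P a + P b \<in> Y" using PY Y(1) by (simp add: subspace_add)
      have "a + b - (P a + P b) = (a - P a) + (b - P b)" by (simp add: algebra_simps)
      moreover have "(a - P a) + (b - P b) \<in> Z" using PY[of a] PY[of b] Z(1) by (simp add: subspace_add)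
      ultimately show "a + b - (P a + P b) \<in> Z" by (simp only:)
    qed
  next
    fix c :: real and a
    show "P (c *\<^sub>R a) = c *\<^sub>R P a"
    proof (rule uniq)
      show "c *\<^sub>R P a \<in> Y" using PY Y(1) by (simp add: subspace_scale)
      have "c *\<^sub>R a - c *\<^sub>R P a = c *\<^sub>R (a - P a)" by (simp add: algebra_simps)
      moreover have "c *\<^sub>R (a - P a) \<in> Z" using PY[of a] Z(1) by (simp add: subspace_scale)
      ultimately show "c *\<^sub>R a - c *\<^sub>R P a \<in> Z" by (simp only:)
    qed
  qed
  have "bounded_linear P"
    by (rule proj_bounded[OF lin Y Z(1,2)]) (use PY uniq in auto)
  moreover have "P y = y" if "y \<in> Y" for y using uniq[OF that] Z(1) by (simp add: subspace_0)
  ultimately show ?thesis using PY by blast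
qed

lemma C1_rel_extend:
  fixes g :: "'x::banach \<Rightarrow> real"
  assumes rel: "C1_rel Y V g" and P: "bounded_linear P" "\<And>x. P x \<in> Y"
    and S: "open S" and V: "V = S \<inter> Y"
  shows "open (S \<inter> P -` S) \<and> C1_on (S \<inter> P -` S) (\<lambda>x. g (P x))"
proof -
  obtain D where D: "\<And>x. x \<in> V \<Longrightarrow> (g has_derivative blinfun_apply (D x)) (at x within V)"
    and Dc: "\<And>x e. x \<in> V \<Longrightarrow> e > 0 \<Longrightarrow> \<exists>d>0. \<forall>x'\<in>V. dist x' x < d \<longrightarrow>
            (\<forall>v\<in>Y. \<bar>D x' v - D x v\<bar> \<le> e * norm v)"
    using rel unfolding C1_rel_def by blast
  define W where "W = S \<inter> P -` S"
  have cP: "continuous (at x) P" for x using P(1) by (simp add: linear_continuous_at)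
  have Wo: "open W" unfolding W_def using S continuous_open_vimage[OF S cP] by blast
  have PW: "P x \<in> V" if "x \<in> W" for x using that P(2) unfolding W_def V by auto
  obtain K where K: "K > 0" "\<And>v. norm (P v) \<le> norm v * K" using bounded_linear.pos_bounded[OF P(1)] by blast
  define E where "E x = D (P x) o\<^sub>L Blinfun P" for x
  have BP: "blinfun_apply (Blinfun P) = P" using P(1) by (rule bounded_linear_Blinfun_apply)
  have "C1_on W (\<lambda>x. g (P x))"
  proof (rule C1_onI[where D=E])
    fix x assume x: "x \<in> W"
    have "((\<lambda>x. g (P x)) has_derivative (\<lambda>y. D (P x) (P y))) (at x within W)"
    proof (rule has_derivative_in_compose2[where t=V])
      show "\<And>x. x \<in> V \<Longrightarrow> (g has_derivative blinfun_apply (D x)) (at x within V)" by (rule D)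
      show "P ` W \<subseteq> V" using PW by blast
      show "x \<in> W" by (rule x)
      show "(P has_derivative P) (at x within W)" using P(1) by (rule bounded_linear_imp_has_derivative)
    qed
    then have "((\<lambda>x. g (P x)) has_derivative (\<lambda>y. D (P x) (P y))) (at x)"
      using at_within_open[OF x Wo] by simp
    moreover have "blinfun_apply (E x) = (\<lambda>y. D (P x) (P y))" unfolding E_def by (rule ext) (simp add: BP)
    ultimately show "((\<lambda>x. g (P x)) has_derivative blinfun_apply (E x)) (at x)" by simp
  next
    show "continuous_on W E"
      unfolding continuous_on_iff
    proof (intro ballI allI impI)
      fix x and e :: real assume x: "x \<in> W" and e: "e > 0"
      have Px: "P x \<in> V" using PW x .
      have e2: "e / (2 * K) > 0" using e K(1) by simp
      obtain d where d: "d > 0" "\<forall>x'\<in>V. dist x' (P x) < d \<longrightarrow> (\<forall>v\<in>Y. \<bar>D x' v - D (P x) v\<bar> \<le> (e/(2*K)) * norm v)"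
        using Dc[OF Px e2] by blast
      show "\<exists>\<delta>>0. \<forall>x'\<in>W. dist x' x < \<delta> \<longrightarrow> dist (E x') (E x) < e"
      proof (intro exI[of _ "d / K"] conjI ballI impI)
        show "d / K > 0" using d K by simp
        fix x' assume x': "x' \<in> W" "dist x' x < d / K"
        have "dist (P x') (P x) \<le> dist x' x * K"
          using K(2)[of "x' - x"] by (simp add: dist_norm linear_diff[OF bounded_linear.linear[OF P(1)]])
        also have "\<dots> < d" using x'(2) K(1) by (simp add: field_simps)
        finally have dd: "dist (P x') (P x) < d" .
        have "norm (E x' - E x) \<le> e/2"
        proof (rule norm_blinfun_bound)
          show "0 \<le> e/2" using e by simp
          fix v
          have "\<bar>D (P x') (P v) - D (P x) (P v)\<bar> \<le> (e/(2*K)) * norm (P v)"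
            using d(2) PW[OF x'(1)] dd P(2) by blast
          also have "\<dots> \<le> (e/(2*K)) * (norm v * K)" using K(2)[of v] e2 by (intro mult_left_mono) auto
          also have "\<dots> = e/2 * norm v" using K(1) by (simp add: field_simps)
          finally show "norm (blinfun_apply (E x' - E x) v) \<le> e/2 * norm v"
            unfolding E_def by (simp add: blinfun.diff_left BP)
        qed
        then show "dist (E x') (E x) < e" using e by (simp add: dist_norm)
      qed
    qed
  qed
  then show ?thesis using Wo unfolding W_def by blast
qed

lemma chart_facts:
  assumes "atlas_chart A U (\<phi>::'m::topological_space \<Rightarrow> 'x::banach)"
  shows "is_chart U \<phi>" "open U" "inj_on \<phi> U" "open (\<phi> ` U)" "continuous_on U \<phi>"
  using assms unfolding atlas_chart_def is_chart_def by auto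

lemma bump_M:
  fixes \<phi> :: "'m::topological_space \<Rightarrow> 'x::banach"
  assumes A: "C1_atlas A" and ps: "property_star TYPE('x)" and U: "atlas_chart A U \<phi>"
    and G: "open G" "closure G \<subseteq> U"
  shows "\<exists>h. C1_fun A h \<and> (\<forall>m. 0 \<le> h m) \<and> (\<forall>m. 0 < h m \<longleftrightarrow> m \<in> G)"
proof -
  note cf = chart_facts[OF U]
  have GU: "G \<subseteq> U" using G(2) closure_subset by (metis order_trans)
  have "open (\<phi> ` (U \<inter> G))" by (rule chart_open_image[OF cf(1) G(1)])
  moreover have "U \<inter> G = G" using GU by blast
  ultimately have oG: "open (\<phi> ` G)" by simp
  obtain ht :: "'x \<Rightarrow> real" where ht: "C1_on UNIV ht" "\<And>x. 0 \<le> ht x" "\<And>x. 0 < ht x \<longleftrightarrow> x \<in> \<phi> ` G"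
    using bump_X[OF ps oG] by blast
  define h where "h m = (if m \<in> U then ht (\<phi> m) else 0)" for m
  have hpos: "0 < h m \<longleftrightarrow> m \<in> G" for m
  proof (cases "m \<in> U")
    case True
    have "\<phi> m \<in> \<phi> ` G \<longleftrightarrow> m \<in> G" using True GU cf(3) by (auto simp: inj_on_def)
    then show ?thesis using True ht(3) unfolding h_def by simp
  next
    case False then show ?thesis using GU unfolding h_def by auto
  qed
  have hnn: "0 \<le> h m" for m unfolding h_def using ht(2) by simp
  have "C1_fun A h"
  proof (rule C1_fun_on_local[OF A])
    fix m
    show "\<exists>W. open W \<and> m \<in> W \<and> C1_fun_on A W h"
    proof (cases "m \<in> U")
      case True
      have "C1_fun_on A U (\<lambda>m. ht (\<phi> m))"
        by (rule C1_fun_on_chart[OF A U cf(2) order_refl C1_on_subset[OF ht(1)]]) simp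
      then have "C1_fun_on A U h" by (rule C1_fun_on_cong[OF A _ cf(2)]) (simp add: h_def)
      then show ?thesis using True cf(2) by blast
    next
      case False
      then have "m \<in> - closure G" using G(2) by blast
      moreover have "C1_fun_on A (- closure G) h"
      proof (rule C1_fun_on_cong[OF A C1_fun_on_const[of A "- closure G" 0]])
        show "open (- closure G)" by (rule open_Compl[OF closed_closure])
        fix m' assume "m' \<in> - closure G"
        then have "m' \<notin> G" using closure_subset by blast
        then show "0 = h m'" using hpos[of m'] hnn[of m'] by simp
      qed
      ultimately show ?thesis using open_Compl[OF closed_closure[of G]] by (intro exI[of _ "- closure G"]) simp
    qed
  qed
  then show ?thesis using hnn hpos by blast
qed

lemma local_data:
  fixes A :: "('m::topological_space set \<times> ('m \<Rightarrow> 'x::banach)) set"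
    and N :: "'m set" and f :: "'m \<Rightarrow> real"
  assumes A: "C1_atlas A" and Pc: "paracompact_space TYPE('m)" and Ncl: "closed N"
    and sub: "C1_submanifold A N" and fN: "C1_fun_on_sub A N f"
  shows "\<exists>G U (\<phi>::'m \<Rightarrow> 'x) Ow e. open G \<and> q \<in> G \<and> atlas_chart A U \<phi> \<and> open Ow \<and> closure G \<subseteq> Ow \<and> Ow \<subseteq> U
           \<and> C1_fun_on A Ow e \<and> (\<forall>m\<in>N \<inter> Ow. e m = f m)"
proof -
  have "\<exists>U (\<phi>::'m \<Rightarrow> 'x) Ow e. atlas_chart A U \<phi> \<and> open Ow \<and> q \<in> Ow \<and> Ow \<subseteq> U
           \<and> C1_fun_on A Ow e \<and> (\<forall>m\<in>N \<inter> Ow. e m = f m)"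
  proof (cases "q \<in> N")
    case True
    then obtain U \<phi> Y where q: "q \<in> U" and sc: "submanifold_chart A N U \<phi> Y"
      using sub unfolding C1_submanifold_def by blast
    have U: "atlas_chart A U \<phi>" and Y: "split_subspace Y" and UN: "\<phi> ` (U \<inter> N) = \<phi> ` U \<inter> Y"
      using sc unfolding submanifold_chart_def by auto
    note cf = chart_facts[OF U]
    obtain Pr where Pr: "bounded_linear Pr" "\<And>x. Pr x \<in> Y" "\<And>y. y \<in> Y \<Longrightarrow> Pr y = y"
      using split_projection[OF Y] by blast
    have rel: "C1_rel Y (\<phi> ` (U \<inter> N)) (f \<circ> inv_into U \<phi>)" using fN sc unfolding C1_fun_on_sub_def by blast
    define S where "S = \<phi> ` U"
    have ext: "open (S \<inter> Pr -` S) \<and> C1_on (S \<inter> Pr -` S) (\<lambda>x. (f \<circ> inv_into U \<phi>) (Pr x))"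
      by (rule C1_rel_extend[OF rel Pr(1,2)]) (use cf(4) UN in \<open>auto simp: S_def\<close>)
    define Ow where "Ow = U \<inter> \<phi> -` (S \<inter> Pr -` S)"
    have ov: "open (\<phi> -` (S \<inter> Pr -` S) \<inter> U)"
      using iffD1[OF continuous_on_open_vimage[OF cf(2)] cf(5), rule_format, OF conjunct1[OF ext]] .
    have Oo: "open Ow" unfolding Ow_def using ov by (simp add: Int_commute)
    have qO: "q \<in> Ow"
    proof -
      have "\<phi> q \<in> Y" using UN q True by blast
      then show ?thesis unfolding Ow_def S_def using q Pr(3) by simp
    qed
    define e where "e m = (f \<circ> inv_into U \<phi>) (Pr (\<phi> m))" for m
    have OU: "Ow \<subseteq> U" unfolding Ow_def by blast
    have "C1_fun_on A Ow (\<lambda>m. (\<lambda>x. (f \<circ> inv_into U \<phi>) (Pr x)) (\<phi> m))"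
    proof (rule C1_fun_on_chart[OF A U Oo OU])
      show "C1_on (\<phi> ` Ow) (\<lambda>x. (f \<circ> inv_into U \<phi>) (Pr x))"
        by (rule C1_on_subset[OF conjunct2[OF ext]]) (auto simp: Ow_def)
    qed
    then have eC: "C1_fun_on A Ow e" unfolding e_def by simp
    have eN: "e m = f m" if "m \<in> N \<inter> Ow" for m
    proof -
      have "\<phi> m \<in> Y" using UN that OU by blast
      then have "Pr (\<phi> m) = \<phi> m" by (rule Pr(3))
      moreover have "inv_into U \<phi> (\<phi> m) = m" using inv_into_f_f[OF cf(3)] that OU by blast
      ultimately show ?thesis unfolding e_def by simp
    qed
    show ?thesis by (intro exI[where x=U] exI[where x=\<phi>] exI[where x=Ow] exI[where x=e] conjI ballI U Oo qO OU eC eN)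
  next
    case False
    have "q \<in> (\<Union>(U,\<phi>)\<in>A. U)" using A unfolding C1_atlas_def by simp
    then obtain U \<phi> where U: "(U, \<phi>) \<in> A" "q \<in> U" by auto
    have Uc: "atlas_chart A U \<phi>" by (rule atlas_chart_of_A[OF A U(1)])
    note cf = chart_facts[OF Uc]
    define Ow where "Ow = U \<inter> - N"
    have "open Ow" unfolding Ow_def using cf(2) Ncl by auto
    moreover have "q \<in> Ow" "Ow \<subseteq> U" unfolding Ow_def using U False by auto
    moreover have "C1_fun_on A Ow (\<lambda>m. 0)" by (rule C1_fun_on_const)
    moreover have "\<forall>m\<in>N \<inter> Ow. (\<lambda>m. 0) m = f m" unfolding Ow_def by blast
    ultimately show ?thesis using Uc by (metis (no_types))
  qed
  then obtain U \<phi> Ow e where d: "atlas_chart A U (\<phi>::'m \<Rightarrow> 'x)" "open Ow" "q \<in> Ow" "Ow \<subseteq> U"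
      "C1_fun_on A Ow e" "\<forall>m\<in>N \<inter> Ow. e m = f m" by blast
  obtain G where g: "open G" "q \<in> G" "closure G \<subseteq> Ow" using paracompact_regular[OF Pc d(2,3)] by blast
  show ?thesis by (intro exI[where x=G] exI[where x=U] exI[where x=\<phi>] exI[where x=Ow] exI[where x=e] conjI g d)
qed

theorem corollary1p3:
  fixes A :: "('m::topological_space set \<times> ('m \<Rightarrow> 'x::banach)) set"
    and N :: "'m set"
    and f :: "'m \<Rightarrow> real"
  assumes "property_star TYPE('x)"
    and "C1_atlas A"
    and "paracompact_space TYPE('m)"
    and "closed N"
    and "C1_submanifold A N"
    and "C1_fun_on_sub A N f"
  shows "\<exists>F. C1_fun A F \<and> (\<forall>x\<in>N. F x = f x)"
proof -
  note ps = assms(1) and A = assms(2) and Pc = assms(3)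
  define \<U> where "\<U> = {G. open G \<and> (\<exists>U (\<phi>::'m\<Rightarrow>'x) Ow e. atlas_chart A U \<phi> \<and> open Ow \<and> closure G \<subseteq> Ow \<and> Ow \<subseteq> U
           \<and> C1_fun_on A Ow e \<and> (\<forall>m\<in>N \<inter> Ow. e m = f m))}"
  have cov: "\<Union>\<U> = UNIV"
  proof safe
    fix q :: 'm
    obtain G U \<phi> Ow e where d: "open G" "q \<in> G" "atlas_chart A U (\<phi>::'m\<Rightarrow>'x)" "open Ow" "closure G \<subseteq> Ow" "Ow \<subseteq> U"
           "C1_fun_on A Ow e" "\<forall>m\<in>N \<inter> Ow. e m = f m"
      using local_data[OF A Pc assms(4,5,6), of q] by blast
    have "G \<in> \<U>" unfolding \<U>_def using d(1,3-) by blast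
    then show "q \<in> \<Union>\<U>" using d(2) by blast
  qed simp
  have "\<forall>U\<in>\<U>. open U" unfolding \<U>_def by blast
  then obtain \<V> where V: "\<forall>V\<in>\<V>. open V" "\<Union>\<V> = UNIV" "\<forall>V\<in>\<V>. \<exists>U\<in>\<U>. V \<subseteq> U" "locally_finite_family \<V>"
    using Pc cov unfolding paracompact_space_def by metis
  define Q where "Q V h e Ow \<longleftrightarrow> C1_fun A h \<and> (\<forall>m. 0 \<le> h m) \<and> (\<forall>m. 0 < h m \<longleftrightarrow> m \<in> V) \<and> open Ow \<and> closure V \<subseteq> Ow
      \<and> C1_fun_on A Ow e \<and> (\<forall>m\<in>N \<inter> Ow. e m = f m)" for V h e Ow
  have exQ: "\<exists>h e Ow. Q V h e Ow" if VV: "V \<in> \<V>" for V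
  proof -
    obtain G where G: "G \<in> \<U>" "V \<subseteq> G" using V(3) VV by blast
    then obtain U \<phi> Ow e where d: "atlas_chart A U (\<phi>::'m\<Rightarrow>'x)" "open Ow" "closure G \<subseteq> Ow" "Ow \<subseteq> U"
           "C1_fun_on A Ow e" "\<forall>m\<in>N \<inter> Ow. e m = f m"
      unfolding \<U>_def by blast
    have cV: "closure V \<subseteq> Ow" using closure_mono[OF G(2)] d(3) by (rule order_trans)
    obtain h where h: "C1_fun A h" "\<forall>m. 0 \<le> h m" "\<forall>m. 0 < h m \<longleftrightarrow> m \<in> V"
      using bump_M[OF A ps d(1) _ order_trans[OF cV d(4)]] V(1) VV by blast
    show ?thesis unfolding Q_def by (intro exI[where x=h] exI[where x=e] exI[where x=Ow] conjI h d(2,5,6) cV)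
  qed
  define hh where "hh V = (SOME h. \<exists>e Ow. Q V h e Ow)" for V
  define ee where "ee V = (SOME e. \<exists>Ow. Q V (hh V) e Ow)" for V
  define OV where "OV V = (SOME Ow. Q V (hh V) (ee V) Ow)" for V
  have QV: "Q V (hh V) (ee V) (OV V)" if VV: "V \<in> \<V>" for V
  proof -
    have 1: "\<exists>e Ow. Q V (hh V) e Ow" unfolding hh_def by (rule someI_ex[OF exQ[OF VV]])
    have 2: "\<exists>Ow. Q V (hh V) (ee V) Ow" unfolding ee_def by (rule someI_ex[OF 1])
    show ?thesis unfolding OV_def by (rule someI_ex[OF 2])
  qed
  have hC: "C1_fun A (hh V)" and hnn: "\<And>m. 0 \<le> hh V m" and hpos: "\<And>m. 0 < hh V m \<longleftrightarrow> m \<in> V"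
    and Oo: "open (OV V)" and cO: "closure V \<subseteq> OV V" and eC: "C1_fun_on A (OV V) (ee V)"
    and eN: "\<And>m. m \<in> N \<Longrightarrow> m \<in> OV V \<Longrightarrow> ee V m = f m"
    if "V \<in> \<V>" for V
    using QV[OF that] unfolding Q_def by auto
  have h0: "hh V m = 0" if "V \<in> \<V>" "m \<notin> V" for V m
    using hnn[OF that(1), of m] hpos[OF that(1), of m] that(2) by simp
  define qq where "qq V m = (if m \<in> OV V then hh V m * ee V m else 0)" for V m
  have q0: "qq V m = 0" if "V \<in> \<V>" "m \<notin> V" for V m
    unfolding qq_def using h0[OF that] by simp
  have qC: "C1_fun A (qq V)" if VV: "V \<in> \<V>" for V
  proof (rule C1_fun_on_local[OF A])
    fix m
    show "\<exists>W. open W \<and> m \<in> W \<and> C1_fun_on A W (qq V)"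
    proof (cases "m \<in> OV V")
      case True
      have "C1_fun_on A (OV V) (\<lambda>m. hh V m * ee V m)"
        by (rule C1_fun_on_mult[OF C1_fun_on_subset[OF hC[OF VV, unfolded C1_fun_iff]] eC[OF VV]]) simp
      then have "C1_fun_on A (OV V) (qq V)" by (rule C1_fun_on_cong[OF A _ Oo[OF VV]]) (simp add: qq_def)
      then show ?thesis using True Oo[OF VV] by blast
    next
      case False
      then have mc: "m \<in> - closure V" using cO[OF VV] by blast
      have "C1_fun_on A (- closure V) (qq V)"
      proof (rule C1_fun_on_cong[OF A C1_fun_on_const[of A "- closure V" 0]])
        show "open (- closure V)" by (rule open_Compl[OF closed_closure])
        fix m' assume "m' \<in> - closure V"
        then have "m' \<notin> V" using closure_subset by blast
        then show "0 = qq V m'" using q0[OF VV] by simp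
      qed
      then show ?thesis using mc open_Compl[OF closed_closure[of V]] by blast
    qed
  qed
  define Sm where "Sm m = (\<Sum>V\<in>{V\<in>\<V>. m \<in> V}. hh V m)" for m
  define Tm where "Tm m = (\<Sum>V\<in>{V\<in>\<V>. m \<in> V}. qq V m)" for m
  have loc: "\<exists>W. open W \<and> m \<in> W \<and> C1_fun_on A W Sm \<and> C1_fun_on A W Tm" for m
  proof -
    obtain W where W: "open W" "m \<in> W" "finite {V \<in> \<V>. V \<inter> W \<noteq> {}}"
      using V(4) unfolding locally_finite_family_def by blast
    define F where "F = {V \<in> \<V>. V \<inter> W \<noteq> {}}"
    have sub: "{V\<in>\<V>. m' \<in> V} \<subseteq> F" if "m' \<in> W" for m' unfolding F_def using that by blast
    have Seq: "Sm m' = (\<Sum>V\<in>F. hh V m')" if "m' \<in> W" for m'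
      unfolding Sm_def
      by (rule sum.mono_neutral_left[OF W(3)[folded F_def] sub[OF that]]) (auto simp: F_def intro: h0)
    have Teq: "Tm m' = (\<Sum>V\<in>F. qq V m')" if "m' \<in> W" for m'
      unfolding Tm_def
      by (rule sum.mono_neutral_left[OF W(3)[folded F_def] sub[OF that]]) (auto simp: F_def intro: q0)
    have "C1_fun_on A W (\<lambda>m'. \<Sum>V\<in>F. hh V m')"
      by (rule C1_fun_on_sum[OF W(3)[folded F_def]])
        (rule C1_fun_on_subset[OF hC[unfolded C1_fun_iff]], auto simp: F_def)
    then have 1: "C1_fun_on A W Sm" by (rule C1_fun_on_cong[OF A _ W(1)]) (simp add: Seq)
    have "C1_fun_on A W (\<lambda>m'. \<Sum>V\<in>F. qq V m')"
      by (rule C1_fun_on_sum[OF W(3)[folded F_def]])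
        (rule C1_fun_on_subset[OF qC[unfolded C1_fun_iff]], auto simp: F_def)
    then have 2: "C1_fun_on A W Tm" by (rule C1_fun_on_cong[OF A _ W(1)]) (simp add: Teq)
    show ?thesis using W(1,2) 1 2 by blast
  qed
  have fin: "finite {V\<in>\<V>. m \<in> V}" for m
  proof -
    obtain W where W: "open W" "m \<in> W" "finite {V \<in> \<V>. V \<inter> W \<noteq> {}}"
      using V(4) unfolding locally_finite_family_def by blast
    show ?thesis by (rule finite_subset[OF _ W(3)]) (use W(2) in blast)
  qed
  have Spos: "Sm m > 0" for m
  proof -
    have "m \<in> \<Union>\<V>" using V(2) by simp
    then obtain V0 where V0: "V0 \<in> \<V>" "m \<in> V0" by blast
    show ?thesis unfolding Sm_def
      by (rule sum_pos2[OF fin, of V0]) (use V0 hpos hnn in auto)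
  qed
  define Fn where "Fn m = Tm m / Sm m" for m
  have "C1_fun A Fn"
  proof (rule C1_fun_on_local[OF A])
    fix m
    obtain W where W: "open W" "m \<in> W" "C1_fun_on A W Sm" "C1_fun_on A W Tm" using loc by blast
    have "C1_fun_on A W Fn" unfolding Fn_def
      by (rule C1_fun_on_divide[OF A W(4) W(3)]) (use Spos in \<open>auto simp: less_imp_neq[symmetric]\<close>)
    then show "\<exists>W. open W \<and> m \<in> W \<and> C1_fun_on A W Fn" using W(1,2) by blast
  qed
  moreover have "Fn m = f m" if mN: "m \<in> N" for m
  proof -
    have "qq V m = hh V m * f m" if "V \<in> {V\<in>\<V>. m \<in> V}" for V
    proof -
      have VV: "V \<in> \<V>" "m \<in> V" using that by auto
      have "m \<in> OV V" using cO[OF VV(1)] closure_subset VV(2) by blast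
      then show ?thesis unfolding qq_def using eN[OF VV(1) mN] by simp
    qed
    then have "Tm m = Sm m * f m" unfolding Tm_def Sm_def by (simp add: sum_distrib_right)
    then show ?thesis unfolding Fn_def using Spos[of m] by simp
  qed
  ultimately show ?thesis by blast
qed

end
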